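(* Let $N,K\in\mathbb{Z}^+$ and $\mu_0\in[\frac1N,1]$ be such that $t=\mu_0N\in[N]$ and $N/t\in\mathbb{Z}^+$. Consider $K$ messages of $L$ bits each and $N$ databases each with storage capacity $\mu_0KL$ bits, and the following scheme: split each message $W_k$ into $N/t$ disjoint equal-size sub-messages $W_{k,1},\ldots,W_{k,N/t}$; split the databases into $N/t$ disjoint groups $\mathcal{N}_1,\ldots,\mathcal{N}_{N/t}$ of size $t$; store $\bigcup_{k\in[K]}W_{k,f}$ at every database of $\mathcal{N}_f$; to retrieve $W_\theta$, for each $f$ the user privately downloads $W_{\theta,f}$ from the $t$ databases of $\mathcal{N}_f$ using a capacity-achieving full-storage PIR scheme. This scheme is a private scheme achieving rate $$R=\left(1+\frac1t+\frac1{t^2}+\cdots+\frac1{t^{K-1}}\right)^{-1}.$$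
   Context: PIR setting: $K$ independent $L$-bit messages stored uncoded among $N$ non-colluding databases; a user wants message $W_\theta$ privately (no single database learns anything about $\theta$ from its query, answer and all stored data) and must decode it with zero error; rate $=L/D$ with $D$ the total number of downloaded bits. A full-storage PIR scheme is a PIR scheme where each of the participating databases stores all (sub-)messages; a capacity-achieving full-storage PIR scheme with $t$ databases and $K$ messages has rate $\left(1+\frac1t+\cdots+\frac1{t^{K-1}}\right)^{-1}$. *)

theory Defs
  imports "HOL-Probability.Probability"
begin

(* Nd databases (indices n < Nd), K messages (indices k < K), each L bits
   (a message vector is W :: nat => bool list, valid if length (W k) = L for k < K).
   store n W   : content stored at database n (type 'd)
   Q theta     : joint distribution of queries (q n is the query sent to database n),
                 depends only on the desired index theta and user randomness
   A n qn d    : answer (bit string) of database n on query qn with stored content d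
   Dec theta q ans : the user's decoder (sees the queries it sent and the answers). *)

definition valid_msgs :: "nat \<Rightarrow> nat \<Rightarrow> (nat \<Rightarrow> bool list) \<Rightarrow> bool" where
  "valid_msgs K L W \<longleftrightarrow> (\<forall>k<K. length (W k) = L)"

definition pir_correct ::
  "nat \<Rightarrow> nat \<Rightarrow> nat \<Rightarrow> (nat \<Rightarrow> (nat \<Rightarrow> bool list) \<Rightarrow> 'd)
   \<Rightarrow> (nat \<Rightarrow> (nat \<Rightarrow> 'q) pmf) \<Rightarrow> (nat \<Rightarrow> 'q \<Rightarrow> 'd \<Rightarrow> bool list)
   \<Rightarrow> (nat \<Rightarrow> (nat \<Rightarrow> 'q) \<Rightarrow> (nat \<Rightarrow> bool list) \<Rightarrow> bool list) \<Rightarrow> bool" where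
  "pir_correct Nd K L store Q A Dec \<longleftrightarrow>
     (\<forall>\<theta><K. \<forall>W. valid_msgs K L W \<longrightarrow>
        (\<forall>q\<in>set_pmf (Q \<theta>).
           Dec \<theta> (\<lambda>n. if n < Nd then q n else undefined)
                 (\<lambda>n. if n < Nd then A n (q n) (store n W) else []) = W \<theta>))"

(* privacy: for every realization of the messages, the joint law of
   (query, answer) seen by any single database does not depend on theta;
   together with independence of the messages from theta this is exactly
   "database n learns nothing about theta from its query, answer and data" *)
definition pir_private ::
  "nat \<Rightarrow> nat \<Rightarrow> nat \<Rightarrow> (nat \<Rightarrow> (nat \<Rightarrow> bool list) \<Rightarrow> 'd)
   \<Rightarrow> (nat \<Rightarrow> (nat \<Rightarrow> 'q) pmf) \<Rightarrow> (nat \<Rightarrow> 'q \<Rightarrow> 'd \<Rightarrow> bool list) \<Rightarrow> bool" where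
  "pir_private Nd K L store Q A \<longleftrightarrow>
     (\<forall>n<Nd. \<forall>W. valid_msgs K L W \<longrightarrow> (\<forall>\<theta><K. \<forall>\<theta>'<K.
        map_pmf (\<lambda>q. (q n, A n (q n) (store n W))) (Q \<theta>) =
        map_pmf (\<lambda>q. (q n, A n (q n) (store n W))) (Q \<theta>')))"

definition download ::
  "nat \<Rightarrow> (nat \<Rightarrow> (nat \<Rightarrow> bool list) \<Rightarrow> 'd)
   \<Rightarrow> (nat \<Rightarrow> (nat \<Rightarrow> 'q) pmf) \<Rightarrow> (nat \<Rightarrow> 'q \<Rightarrow> 'd \<Rightarrow> bool list)
   \<Rightarrow> nat \<Rightarrow> (nat \<Rightarrow> bool list) \<Rightarrow> real" where
  "download Nd store Q A \<theta> W =
     measure_pmf.expectation (Q \<theta>) (\<lambda>q. \<Sum>n<Nd. real (length (A n (q n) (store n W))))"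

(* the scheme achieves rate R = L / D (finite user randomness, so D is well defined) *)
definition pir_rate ::
  "nat \<Rightarrow> nat \<Rightarrow> nat \<Rightarrow> (nat \<Rightarrow> (nat \<Rightarrow> bool list) \<Rightarrow> 'd)
   \<Rightarrow> (nat \<Rightarrow> (nat \<Rightarrow> 'q) pmf) \<Rightarrow> (nat \<Rightarrow> 'q \<Rightarrow> 'd \<Rightarrow> bool list) \<Rightarrow> real \<Rightarrow> bool" where
  "pir_rate Nd K L store Q A R \<longleftrightarrow>
     (\<forall>\<theta><K. finite (set_pmf (Q \<theta>))) \<and>
     (\<forall>\<theta><K. \<forall>W. valid_msgs K L W \<longrightarrow> real L / download Nd store Q A \<theta> W = R)"

definition full_store :: "nat \<Rightarrow> (nat \<Rightarrow> bool list) \<Rightarrow> (nat \<Rightarrow> bool list)" where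
  "full_store n W = W"

(* capacity-achieving rate of full-storage PIR with t databases and K messages *)
definition cap_rate :: "nat \<Rightarrow> nat \<Rightarrow> real" where
  "cap_rate t K = inverse (\<Sum>i<K. 1 / real t ^ i)"

(* ---- The storage-constrained scheme of the corollary ----
   t databases per group, N div t groups, sub-message length m = L div (N div t).
   Database n belongs to group f = n div t (0-indexed), position n mod t. *)

definition sub_msg :: "nat \<Rightarrow> nat \<Rightarrow> (nat \<Rightarrow> bool list) \<Rightarrow> nat \<Rightarrow> bool list" where
  "sub_msg m f W k = take m (drop (f * m) (W k))"

definition split_store :: "nat \<Rightarrow> nat \<Rightarrow> nat \<Rightarrow> (nat \<Rightarrow> bool list) \<Rightarrow> (nat \<Rightarrow> bool list)" where
  "split_store t m n W = sub_msg m (n div t) W"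

(* independent runs of the full-storage scheme, one per group *)
definition split_query :: "nat \<Rightarrow> nat \<Rightarrow> (nat \<Rightarrow> (nat \<Rightarrow> 'q) pmf) \<Rightarrow> nat \<Rightarrow> (nat \<Rightarrow> 'q) pmf" where
  "split_query N t Q \<theta> =
     map_pmf (\<lambda>qs n. qs (n div t) (n mod t)) (Pi_pmf {..<N div t} undefined (\<lambda>f. Q \<theta>))"

definition split_answer :: "nat \<Rightarrow> (nat \<Rightarrow> 'q \<Rightarrow> (nat \<Rightarrow> bool list) \<Rightarrow> bool list)
   \<Rightarrow> nat \<Rightarrow> 'q \<Rightarrow> (nat \<Rightarrow> bool list) \<Rightarrow> bool list" where
  "split_answer t A n qn d = A (n mod t) qn d"

definition split_decode :: "nat \<Rightarrow> nat
   \<Rightarrow> (nat \<Rightarrow> (nat \<Rightarrow> 'q) \<Rightarrow> (nat \<Rightarrow> bool list) \<Rightarrow> bool list)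
   \<Rightarrow> nat \<Rightarrow> (nat \<Rightarrow> 'q) \<Rightarrow> (nat \<Rightarrow> bool list) \<Rightarrow> bool list" where
  "split_decode N t Dec \<theta> q ans =
     concat (map (\<lambda>f. Dec \<theta> (\<lambda>j. if j < t then q (f * t + j) else undefined)
                           (\<lambda>j. if j < t then ans (f * t + j) else []))
                 [0..<N div t])"

end

theory Submission
  imports Defs
begin

lemma concat_chunks:
  "length xs = G * m \<Longrightarrow> concat (map (\<lambda>f. take m (drop (f * m) xs)) [0..<G]) = xs"
proof (induction G arbitrary: xs)
  case 0
  then show ?case by simp
next
  case (Suc G)
  have "length (drop m xs) = G * m" using Suc.prems by simp
  from Suc.IH[OF this] have IH: "concat (map (\<lambda>f. take m (drop (f * m) (drop m xs))) [0..<G]) = drop m xs" .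
  have "concat (map (\<lambda>f. take m (drop (f * m) xs)) [0..<Suc G])
      = take m xs @ concat (map (\<lambda>f. take m (drop (f * m) (drop m xs))) [0..<G])"
    by (simp only: map_upt_Suc) (simp add: add.commute)
  also have "\<dots> = xs" using IH by simp
  finally show ?case .
qed

lemma sub_msg_len:
  assumes "f < G" "length (W k) = G * m"
  shows "length (sub_msg m f W k) = m"
proof -
  have "f * m + m \<le> G * m" using assms(1)
    by (metis Suc_leI add.commute mult_Suc mult_le_mono1)
  then show ?thesis using assms(2) by (simp add: sub_msg_def)
qed

lemma sum_blocks:
  fixes h :: "nat \<Rightarrow> real"
  shows "(\<Sum>n<G * t. h n) = (\<Sum>f<G. \<Sum>j<t. h (f * t + j))"
proof (induction G)
  case 0
  then show ?case by simp
next
  case (Suc G)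
  have "(\<Sum>n<Suc G * t. h n) = (\<Sum>n<G * t + t. h n)" by (simp add: add.commute)
  also have "\<dots> = (\<Sum>n<G * t. h n) + (\<Sum>n\<in>{G*t..<G * t + t}. h n)"
    by (rule sum.atLeastLessThan_concat[of 0, simplified lessThan_atLeast0[symmetric], symmetric]) simp_all
  also have "(\<Sum>n\<in>{G*t..<G * t + t}. h n) = (\<Sum>j<t. h (G * t + j))"
  proof -
    have "(\<Sum>n\<in>{0 + G*t..<t + G * t}. h n) = (\<Sum>j\<in>{0..<t}. h (j + G * t))"
      by (rule sum.shift_bounds_nat_ivl)
    then show ?thesis by (simp add: add.commute lessThan_atLeast0)
  qed
  finally show ?case using Suc.IH by simp
qed

lemma split_query_marg:
  assumes "f < G" "0 < t" "j < t"
  shows "map_pmf (\<lambda>q. g (q (f * t + j))) (split_query (G * t) t Q \<theta>) =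
         map_pmf (\<lambda>q. g (q j)) (Q \<theta>)"
proof -
  have "map_pmf (\<lambda>q. g (q (f * t + j))) (split_query (G * t) t Q \<theta>)
      = map_pmf (\<lambda>qs. g (qs f j)) (Pi_pmf {..<G} undefined (\<lambda>f. Q \<theta>))"
    unfolding split_query_def map_pmf_comp using assms by (simp add: o_def)
  also have "\<dots> = map_pmf (\<lambda>q. g (q j)) (map_pmf (\<lambda>qs. qs f) (Pi_pmf {..<G} undefined (\<lambda>f. Q \<theta>)))"
    by (simp add: map_pmf_comp)
  also have "\<dots> = map_pmf (\<lambda>q. g (q j)) (Q \<theta>)"
    using assms by (simp add: Pi_pmf_component)
  finally show ?thesis .
qed

theorem corollary1:
  fixes N K L t :: nat and \<mu>0 :: real
    and Q :: "nat \<Rightarrow> (nat \<Rightarrow> 'q) pmf"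
    and A :: "nat \<Rightarrow> 'q \<Rightarrow> (nat \<Rightarrow> bool list) \<Rightarrow> bool list"
    and Dec :: "nat \<Rightarrow> (nat \<Rightarrow> 'q) \<Rightarrow> (nat \<Rightarrow> bool list) \<Rightarrow> bool list"
  assumes "N \<ge> 1" and "K \<ge> 1" and "L \<ge> 1"
    and "1 / real N \<le> \<mu>0" and "\<mu>0 \<le> 1"
    and "real t = \<mu>0 * real N" and "1 \<le> t" and "t \<le> N" and "t dvd N"
    and "(N div t) dvd L"
    and "pir_correct t K (L div (N div t)) full_store Q A Dec"
    and "pir_private t K (L div (N div t)) full_store Q A"
    and "pir_rate t K (L div (N div t)) full_store Q A (cap_rate t K)"
  shows "(\<forall>W. valid_msgs K L W \<longrightarrow> (\<forall>n<N.
            (\<Sum>k<K. real (length (split_store t (L div (N div t)) n W k))) = \<mu>0 * real K * real L))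
       \<and> pir_correct N K L (split_store t (L div (N div t)))
            (split_query N t Q) (split_answer t A) (split_decode N t Dec)
       \<and> pir_private N K L (split_store t (L div (N div t)))
            (split_query N t Q) (split_answer t A)
       \<and> pir_rate N K L (split_store t (L div (N div t)))
            (split_query N t Q) (split_answer t A) (cap_rate t K)"
proof -
  define G where "G = N div t"
  define m where "m = L div G"
  have NG: "N = G * t" using assms(9) unfolding G_def by simp
  have LG: "L = G * m" using assms(10) unfolding m_def G_def by simp
  have pc: "pir_correct t K m full_store Q A Dec" using assms(11) by (simp add: m_def G_def)
  have pv: "pir_private t K m full_store Q A" using assms(12) by (simp add: m_def G_def)
  have pr: "pir_rate t K m full_store Q A (cap_rate t K)" using assms(13) by (simp add: m_def G_def)
  have tpos: "0 < t" using assms(7) by simp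
  have Gpos: "0 < G" using NG assms(1) by (cases G) auto
  have mpos: "0 < m" using LG assms(3) by (cases m) auto
  have mu: "\<mu>0 = real t / real N" using assms(6) assms(1) by (simp add: field_simps)
  have ndiv: "n div t < G" if "n < N" for n
    using that NG tpos by (simp add: less_mult_imp_div_less)
  have valid_sub: "valid_msgs K m (sub_msg m f W)" if "f < G" "valid_msgs K L W" for f W
    using that sub_msg_len[of f G W _ m] LG unfolding valid_msgs_def by auto
  have idx: "(f * t + j) div t = f" "(f * t + j) mod t = j" if "j < t" for f j
    using that tpos by auto
  have lt: "f * t + j < N" if "f < G" "j < t" for f j
  proof -
    have "f * t + j < f * t + t" using that by simp
    also have "\<dots> = Suc f * t" by simp
    also have "\<dots> \<le> G * t" using that(1) by (intro mult_le_mono1) simp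
    finally show ?thesis using NG by simp
  qed
  have P1: "\<forall>W. valid_msgs K L W \<longrightarrow> (\<forall>n<N.
            (\<Sum>k<K. real (length (split_store t (L div (N div t)) n W k))) = \<mu>0 * real K * real L)"
  proof (intro allI impI)
    fix W n assume W: "valid_msgs K L W" and n: "n < N"
    have "(\<Sum>k<K. real (length (split_store t m n W k))) = (\<Sum>k<K. real m)"
      using W sub_msg_len[OF ndiv[OF n], of W _ m] LG
      by (intro sum.cong) (auto simp: split_store_def valid_msgs_def)
    also have "\<dots> = \<mu>0 * real K * real L"
      using mu NG LG tpos Gpos by (simp add: field_simps)
    finally show "(\<Sum>k<K. real (length (split_store t (L div (N div t)) n W k))) = \<mu>0 * real K * real L"
      by (simp add: m_def G_def)
  qed
  have P2: "pir_correct N K L (split_store t m) (split_query N t Q) (split_answer t A) (split_decode N t Dec)"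
    unfolding pir_correct_def
  proof (intro allI impI ballI)
    fix \<theta> W q assume th: "\<theta> < K" and W: "valid_msgs K L W" and q: "q \<in> set_pmf (split_query N t Q \<theta>)"
    obtain qs where qs: "qs \<in> set_pmf (Pi_pmf {..<G} undefined (\<lambda>f. Q \<theta>))"
      and qdef: "q = (\<lambda>n. qs (n div t) (n mod t))"
      using q unfolding split_query_def G_def by auto
    have qsf: "qs f \<in> set_pmf (Q \<theta>)" if "f < G" for f
      using qs that by (auto simp: set_Pi_pmf PiE_dflt_def)
    have blk: "Dec \<theta> (\<lambda>j. if j < t then (\<lambda>n. if n < N then q n else undefined) (f * t + j) else undefined)
         (\<lambda>j. if j < t then (\<lambda>n. if n < N then split_answer t A n (q n) (split_store t m n W) else []) (f * t + j) else [])
       = sub_msg m f W \<theta>" if f: "f < G" for f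
    proof -
      have "Dec \<theta> (\<lambda>j. if j < t then (\<lambda>n. if n < N then q n else undefined) (f * t + j) else undefined)
         (\<lambda>j. if j < t then (\<lambda>n. if n < N then split_answer t A n (q n) (split_store t m n W) else []) (f * t + j) else [])
         = Dec \<theta> (\<lambda>j. if j < t then qs f j else undefined)
              (\<lambda>j. if j < t then A j (qs f j) (full_store j (sub_msg m f W)) else [])"
        using lt[OF f] idx by (intro arg_cong2[where f="Dec \<theta>"] ext)
          (auto simp: qdef split_answer_def split_store_def full_store_def)
      also have "\<dots> = sub_msg m f W \<theta>"
        using pc th valid_sub[OF f W] qsf[OF f] unfolding pir_correct_def
        by blast
      finally show ?thesis .
    qed
    have "split_decode N t Dec \<theta> (\<lambda>n. if n < N then q n else undefined)
             (\<lambda>n. if n < N then split_answer t A n (q n) (split_store t m n W) else [])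
        = concat (map (\<lambda>f. sub_msg m f W \<theta>) [0..<G])"
      unfolding split_decode_def G_def[symmetric]
      by (intro arg_cong[where f=concat] map_cong refl blk) simp
    also have "\<dots> = W \<theta>"
      unfolding sub_msg_def using W th LG by (intro concat_chunks) (simp add: valid_msgs_def)
    finally show "split_decode N t Dec \<theta> (\<lambda>n. if n < N then q n else undefined)
             (\<lambda>n. if n < N then split_answer t A n (q n) (split_store t m n W) else []) = W \<theta>" .
  qed
  have P3: "pir_private N K L (split_store t m) (split_query N t Q) (split_answer t A)"
    unfolding pir_private_def
  proof (intro allI impI)
    fix n W \<theta> \<theta>' assume n: "n < N" and W: "valid_msgs K L W" and th: "\<theta> < K" and th': "\<theta>' < K"
    define f j where "f = n div t" and "j = n mod t"
    have nfj: "n = f * t + j" unfolding f_def j_def by simp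
    have f: "f < G" unfolding f_def using ndiv n by simp
    have j: "j < t" unfolding j_def using tpos by simp
    have eq: "map_pmf (\<lambda>q. (q n, split_answer t A n (q n) (split_store t m n W))) (split_query N t Q th)
        = map_pmf (\<lambda>q. (q j, A j (q j) (full_store j (sub_msg m f W)))) (Q th)" for th
    proof -
      have "map_pmf (\<lambda>q. (q n, split_answer t A n (q n) (split_store t m n W))) (split_query N t Q th)
          = map_pmf (\<lambda>q. (\<lambda>x. (x, A j x (sub_msg m f W))) (q (f * t + j))) (split_query (G * t) t Q th)"
        using NG nfj by (simp add: split_answer_def split_store_def f_def j_def)
      also have "\<dots> = map_pmf (\<lambda>q. (\<lambda>x. (x, A j x (sub_msg m f W))) (q j)) (Q th)"
        by (rule split_query_marg[OF f tpos j])
      finally show ?thesis by (simp add: full_store_def)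
    qed
    show "map_pmf (\<lambda>q. (q n, split_answer t A n (q n) (split_store t m n W))) (split_query N t Q \<theta>) =
          map_pmf (\<lambda>q. (q n, split_answer t A n (q n) (split_store t m n W))) (split_query N t Q \<theta>')"
      unfolding eq using pv j valid_sub[OF f W] th th' unfolding pir_private_def
      by blast
  qed
  have c_pos: "cap_rate t K > 0"
  proof -
    have "(\<Sum>i<K. 1 / real t ^ i) \<ge> (\<Sum>i\<in>{0::nat}. 1 / real t ^ i)"
      using assms(2) by (intro sum_mono2) auto
    then have "(\<Sum>i<K. 1 / real t ^ i) > 0" by simp
    then show ?thesis unfolding cap_rate_def by simp
  qed
  have fin: "finite (set_pmf (Q \<theta>))" if "\<theta> < K" for \<theta>
    using assms(13) that unfolding pir_rate_def by auto
  have finS: "finite (set_pmf (split_query N t Q \<theta>))" if "\<theta> < K" for \<theta>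
    unfolding split_query_def using fin[OF that]
    by (auto simp: set_Pi_pmf intro!: finite_PiE_dflt)
  have P4: "pir_rate N K L (split_store t m) (split_query N t Q) (split_answer t A) (cap_rate t K)"
    unfolding pir_rate_def
  proof (intro conjI allI impI)
    fix \<theta> assume "\<theta> < K" then show "finite (set_pmf (split_query N t Q \<theta>))" by (rule finS)
  next
    fix \<theta> W assume th: "\<theta> < K" and W: "valid_msgs K L W"
    have finS': "finite (set_pmf (split_query (G * t) t Q \<theta>))" using finS[OF th] NG by simp
    let ?D = "\<lambda>f. download t full_store Q A \<theta> (sub_msg m f W)"
    have Df: "?D f = real m / cap_rate t K" if f: "f < G" for f
    proof -
      have "real m / ?D f = cap_rate t K"
        using pr th valid_sub[OF f W] unfolding pir_rate_def by blast
      moreover have "?D f \<noteq> 0" using \<open>real m / ?D f = cap_rate t K\<close> c_pos by auto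
      ultimately show ?thesis using c_pos by (auto simp: field_simps)
    qed
    have "download N (split_store t m) (split_query N t Q) (split_answer t A) \<theta> W
       = measure_pmf.expectation (split_query (G * t) t Q \<theta>)
           (\<lambda>q. \<Sum>f<G. \<Sum>j<t. real (length (A j (q (f * t + j)) (sub_msg m f W))))"
      unfolding download_def NG[symmetric] sum_blocks[of _ G t, folded NG]
      by (intro Bochner_Integration.integral_cong refl sum.cong)
        (simp_all add: idx split_answer_def split_store_def)
    also have "\<dots> = (\<Sum>f<G. measure_pmf.expectation (split_query (G * t) t Q \<theta>)
           (\<lambda>q. \<Sum>j<t. real (length (A j (q (f * t + j)) (sub_msg m f W)))))"
      by (simp add: integrable_measure_pmf_finite[OF finS'])
    also have "\<dots> = (\<Sum>f<G. ?D f)"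
    proof (intro sum.cong refl)
      fix f assume f: "f \<in> {..<G}"
      have e2: "measure_pmf.expectation (split_query (G * t) t Q \<theta>)
           (\<lambda>q. \<Sum>j<t. real (length (A j (q (f * t + j)) (sub_msg m f W))))
          = (\<Sum>j<t. measure_pmf.expectation (split_query (G * t) t Q \<theta>)
           (\<lambda>q. real (length (A j (q (f * t + j)) (sub_msg m f W)))))"
        by (simp add: integrable_measure_pmf_finite[OF finS'])
      have e3: "(\<Sum>j<t. measure_pmf.expectation (split_query (G * t) t Q \<theta>)
           (\<lambda>q. real (length (A j (q (f * t + j)) (sub_msg m f W)))))
          = (\<Sum>j<t. measure_pmf.expectation (Q \<theta>)
           (\<lambda>q. real (length (A j (q j) (sub_msg m f W)))))"
      proof (intro sum.cong refl)
        fix j assume j: "j \<in> {..<t}"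
        have "measure_pmf.expectation (split_query (G * t) t Q \<theta>)
           (\<lambda>q. real (length (A j (q (f * t + j)) (sub_msg m f W))))
          = measure_pmf.expectation (map_pmf (\<lambda>q. q (f * t + j)) (split_query (G * t) t Q \<theta>))
           (\<lambda>x. real (length (A j x (sub_msg m f W))))" by simp
        also have "\<dots> = measure_pmf.expectation (map_pmf (\<lambda>q. q j) (Q \<theta>))
           (\<lambda>x. real (length (A j x (sub_msg m f W))))"
          using split_query_marg[where g="\<lambda>x. x" and f=f and G=G and t=t and j=j and Q=Q and \<theta>=\<theta>] f j tpos by simp
        finally show "measure_pmf.expectation (split_query (G * t) t Q \<theta>)
           (\<lambda>q. real (length (A j (q (f * t + j)) (sub_msg m f W))))
          = measure_pmf.expectation (Q \<theta>) (\<lambda>q. real (length (A j (q j) (sub_msg m f W))))" by simp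
      qed
      have e4: "(\<Sum>j<t. measure_pmf.expectation (Q \<theta>)
           (\<lambda>q. real (length (A j (q j) (sub_msg m f W))))) = ?D f"
        unfolding download_def full_store_def
        by (simp add: integrable_measure_pmf_finite[OF fin[OF th]])
      show "measure_pmf.expectation (split_query (G * t) t Q \<theta>)
           (\<lambda>q. \<Sum>j<t. real (length (A j (q (f * t + j)) (sub_msg m f W)))) = ?D f"
        using e2 e3 e4 by (rule trans[OF _ trans])
    qed
    also have "\<dots> = real G * (real m / cap_rate t K)" using Df by simp
    finally have D: "download N (split_store t m) (split_query N t Q) (split_answer t A) \<theta> W
        = real L / cap_rate t K" using LG by simp
    show "real L / download N (split_store t m) (split_query N t Q) (split_answer t A) \<theta> W = cap_rate t K"
      unfolding D using assms(3) c_pos by (simp add: field_simps)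
  qed
  show ?thesis using P1 P2 P3 P4 unfolding m_def G_def by blast
qed

end
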